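(* For every $n\geq1$, $$\sum_{\sigma\in\mathfrak S_{n}}u^{{\rm L}(\sigma)}(-1)^{{\rm RLmin}(\sigma)}=\begin{cases}(1-u)^{\lfloor n/2\rfloor},& n\text{ even},\\ -(1-u)^{\lfloor n/2\rfloor},& n\text{ odd}.\end{cases}$$
   Context: For $\sigma=\sigma_1\cdots\sigma_n\in\mathfrak S_n$: ${\rm L}(\sigma)$ (left peaks) is the number of $i$ with $1\le i<n$ and $\sigma_{i-1}<\sigma_i>\sigma_{i+1}$, with the convention $\sigma_0=0$; ${\rm RLmin}(\sigma)$ is the number of $i$ with $\sigma_j>\sigma_i$ for all $j>i$. *)

theory Defs
  imports "HOL-Combinatorics.Permutations"
begin

text \<open>A permutation sigma of S_n is a bijection of {1..n}; its one-line word is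
  sigma 1, ..., sigma n.  We use the convention sigma_0 = 0.\<close>

definition perm_val :: "(nat \<Rightarrow> nat) \<Rightarrow> nat \<Rightarrow> nat" where
  "perm_val \<sigma> i = (if i = 0 then 0 else \<sigma> i)"

definition left_peaks :: "nat \<Rightarrow> (nat \<Rightarrow> nat) \<Rightarrow> nat" where
  "left_peaks n \<sigma> = card {i. 1 \<le> i \<and> i < n \<and>
      perm_val \<sigma> (i - 1) < perm_val \<sigma> i \<and> perm_val \<sigma> i > perm_val \<sigma> (i + 1)}"

definition rl_min :: "nat \<Rightarrow> (nat \<Rightarrow> nat) \<Rightarrow> nat" where
  "rl_min n \<sigma> = card {i. 1 \<le> i \<and> i \<le> n \<and>
      (\<forall>j. i < j \<and> j \<le> n \<longrightarrow> perm_val \<sigma> j > perm_val \<sigma> i)}"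

end

theory Submission
  imports Defs
begin


definition vl :: "nat list \<Rightarrow> nat \<Rightarrow> nat" where
  "vl xs i = (if i = 0 then 0 else xs ! (i - 1))"
definition peakset :: "nat list \<Rightarrow> nat set" where
  "peakset xs = {i. 1 \<le> i \<and> i < length xs \<and> vl xs (i - 1) < vl xs i \<and> vl xs (i + 1) < vl xs i}"
definition rmset :: "nat list \<Rightarrow> nat set" where
  "rmset xs = {i. 1 \<le> i \<and> i \<le> length xs \<and> (\<forall>j. i < j \<and> j \<le> length xs \<longrightarrow> vl xs i < vl xs j)}"
definition ins :: "nat \<Rightarrow> nat \<Rightarrow> nat list \<Rightarrow> nat list" where
  "ins j x ys = take j ys @ x # drop j ys"

lemma length_ins[simp]: "j \<le> length ys \<Longrightarrow> length (ins j x ys) = Suc (length ys)"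
  by (simp add: ins_def)

lemma vl_ins: "j \<le> length ys \<Longrightarrow> i \<le> Suc (length ys) \<Longrightarrow> vl (ins j x ys) i =
   (if i \<le> j then vl ys i else if i = Suc j then x else vl ys (i - 1))"
  by (auto simp: vl_def ins_def nth_append min_def nth_Cons' nth_drop numeral_2_eq_2)

lemma vl_lt: assumes "\<forall>y\<in>set ys. y < M" "0 < M" "i \<le> length ys" shows "vl ys i < M"
  using assms by (auto simp: vl_def)

context
  fixes ys :: "nat list" and M j :: nat
  assumes lt: "\<forall>y\<in>set ys. y < M" and M0: "0 < M" and jl: "j \<le> length ys"
begin

lemma vz: "i \<le> Suc (length ys) \<Longrightarrow> vl (ins j M ys) i =
   (if i \<le> j then vl ys i else if i = Suc j then M else vl ys (i - 1))"
  using vl_ins[OF jl] by blast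

lemma vlt: "i \<le> length ys \<Longrightarrow> vl ys i < M" using vl_lt lt M0 by blast

lemma rm1: "x \<le> j \<Longrightarrow> x \<in> rmset (ins j M ys) \<longleftrightarrow> x \<in> rmset ys"
proof
  assume x: "x \<le> j" "x \<in> rmset (ins j M ys)"
  then have a: "\<And>l. x < l \<Longrightarrow> l \<le> Suc (length ys) \<Longrightarrow> vl (ins j M ys) x < vl (ins j M ys) l"
    and b: "1 \<le> x" using jl by (auto simp: rmset_def)
  have "vl ys x < vl ys l" if "x < l" "l \<le> length ys" for l
  proof (cases "l \<le> j")
    case True then show ?thesis using a[of l] that x jl by (simp add: vz)
  next
    case False then show ?thesis using a[of "Suc l"] that x jl by (simp add: vz)
  qed
  then show "x \<in> rmset ys" using b x jl by (auto simp: rmset_def)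
next
  assume x: "x \<le> j" "x \<in> rmset ys"
  then have a: "\<And>l. x < l \<Longrightarrow> l \<le> length ys \<Longrightarrow> vl ys x < vl ys l"
    and b: "1 \<le> x" using jl by (auto simp: rmset_def)
  have "vl (ins j M ys) x < vl (ins j M ys) l" if "x < l" "l \<le> Suc (length ys)" for l
    using a[of l] a[of "l - 1"] that x jl vlt[of x] by (auto simp: vz)
  then show "x \<in> rmset (ins j M ys)" using b x jl by (auto simp: rmset_def)
qed

lemma rm2: "Suc j \<in> rmset (ins j M ys) \<longleftrightarrow> j = length ys"
proof
  assume "Suc j \<in> rmset (ins j M ys)"
  then have "\<forall>l. Suc j < l \<and> l \<le> Suc (length ys) \<longrightarrow> M < vl (ins j M ys) l"
    using jl by (auto simp: rmset_def vz)
  then have "\<not> Suc j < Suc (length ys)" using vz[of "Suc (length ys)"] vlt[of "length ys"] by auto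
  then show "j = length ys" using jl by simp
qed (use jl in \<open>auto simp: rmset_def\<close>)

lemma rm3: "Suc j < x \<Longrightarrow> x \<in> rmset (ins j M ys) \<longleftrightarrow> x - 1 \<in> rmset ys"
proof
  assume x: "Suc j < x" "x \<in> rmset (ins j M ys)"
  then have a: "\<And>l. x < l \<Longrightarrow> l \<le> Suc (length ys) \<Longrightarrow> vl (ins j M ys) x < vl (ins j M ys) l"
    and b: "x \<le> Suc (length ys)" using jl by (auto simp: rmset_def)
  have "vl ys (x - 1) < vl ys l" if "x - 1 < l" "l \<le> length ys" for l
    using a[of "Suc l"] that x b by (simp add: vz)
  then show "x - 1 \<in> rmset ys" using b x jl by (auto simp: rmset_def)
next
  assume x: "Suc j < x" "x - 1 \<in> rmset ys"
  then have a: "\<And>l. x - 1 < l \<Longrightarrow> l \<le> length ys \<Longrightarrow> vl ys (x - 1) < vl ys l"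
    and b: "x \<le> Suc (length ys)" using jl by (auto simp: rmset_def)
  have "vl (ins j M ys) x < vl (ins j M ys) l" if "x < l" "l \<le> Suc (length ys)" for l
    using a[of "l - 1"] that x b by (auto simp: vz)
  then show "x \<in> rmset (ins j M ys)" using b x jl by (auto simp: rmset_def)
qed

lemma card_rm: "card (rmset (ins j M ys)) = card (rmset ys) + (if j = length ys then 1 else 0)"
proof -
  let ?g = "\<lambda>i. if i \<le> j then i else Suc i"
  have fin: "finite (rmset ys)" by (simp add: rmset_def)
  have eq: "rmset (ins j M ys) = ?g ` rmset ys \<union> (if j = length ys then {Suc j} else {})"
  proof (rule set_eqI)
    fix x
    show "x \<in> rmset (ins j M ys) \<longleftrightarrow> x \<in> ?g ` rmset ys \<union> (if j = length ys then {Suc j} else {})"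
    proof (cases "x \<le> j")
      case True then show ?thesis using rm1[of x]
        by (auto simp: image_iff split: if_splits) 
    next
      case F: False
      show ?thesis
      proof (cases "x = Suc j")
        case True then show ?thesis using rm2 by (auto simp: image_iff split: if_splits)
      next
        case False then have "Suc j < x" using F by simp
        then show ?thesis using rm3[of x] F
          by (auto simp: image_iff split: if_splits intro: bexI[of _ "x - 1"])
      qed
    qed
  qed
  have inj: "inj ?g" by (auto simp: inj_def split: if_splits)
  have "Suc j \<notin> ?g ` rmset ys" by (auto split: if_splits)
  then show ?thesis unfolding eq using fin card_image[OF inj_on_subset[OF inj]]
    by (auto simp: card_insert_if)
qed


lemma pk1: "x < j \<Longrightarrow> x \<in> peakset (ins j M ys) \<longleftrightarrow> x \<in> peakset ys"
  using jl by (auto simp: peakset_def vz)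

lemma pk2: "j \<notin> peakset (ins j M ys)"
  using jl vlt[of j] by (auto simp: peakset_def vz)

lemma pk3: "Suc j \<in> peakset (ins j M ys) \<longleftrightarrow> j < length ys"
  using jl vlt[of j] vlt[of "Suc j"] by (auto simp: peakset_def vz)

lemma pk4: "Suc (Suc j) \<notin> peakset (ins j M ys)"
  using jl vlt[of "Suc j"] by (auto simp: peakset_def vz)

lemma pk5: "Suc (Suc j) < x \<Longrightarrow> x \<in> peakset (ins j M ys) \<longleftrightarrow> x - 1 \<in> peakset ys"
  using jl by (auto simp: peakset_def vz split: if_splits)

lemma card_pk: "card (peakset (ins j M ys)) + (if j \<in> peakset ys then 1 else 0)
   + (if Suc j \<in> peakset ys then 1 else 0) = card (peakset ys) + (if j < length ys then 1 else 0)"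
proof -
  let ?g = "\<lambda>i. if i \<le> j then i else Suc i"
  let ?P = "peakset ys"
  have fin: "finite ?P" by (simp add: peakset_def)
  have eq: "peakset (ins j M ys) = ?g ` (?P - {j, Suc j}) \<union> (if j < length ys then {Suc j} else {})"
  proof (rule set_eqI)
    fix x
    consider "x < j" | "x = j" | "x = Suc j" | "x = Suc (Suc j)" | "Suc (Suc j) < x" by linarith
    then show "x \<in> peakset (ins j M ys) \<longleftrightarrow> x \<in> ?g ` (?P - {j, Suc j}) \<union> (if j < length ys then {Suc j} else {})"
    proof cases
      case 1 then show ?thesis using pk1[of x] by (auto simp: image_iff split: if_splits)
    next
      case 2 then show ?thesis using pk2 by (auto simp: image_iff split: if_splits)
    next
      case 3 then show ?thesis using pk3 by (auto simp: image_iff split: if_splits)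
    next
      case 4 then show ?thesis using pk4 by (auto simp: image_iff split: if_splits)
    next
      case 5 then show ?thesis using pk5[of x]
        by (auto simp: image_iff split: if_splits intro: bexI[of _ "x - 1"])
    qed
  qed
  have inj: "inj ?g" by (auto simp: inj_def split: if_splits)
  have "Suc j \<notin> ?g ` (?P - {j, Suc j})" by (auto split: if_splits)
  then have c1: "card (peakset (ins j M ys)) = card (?P - {j, Suc j}) + (if j < length ys then 1 else 0)"
    unfolding eq using fin card_image[OF inj_on_subset[OF inj]]
    by (auto simp: card_insert_if)
  have c2: "card (?P - {j, Suc j}) + (if j \<in> ?P then 1 else 0) + (if Suc j \<in> ?P then 1 else 0) = card ?P"
  proof -
    have "card ?P = card (?P - {j, Suc j}) + card (?P \<inter> {j, Suc j})"
      using fin by (metis Diff_Int2 card_Diff_subset_Int add.commute card_mono finite_Int le_add_diff_inverse inf_le1 inf_commute Diff_Diff_Int Int_lower1 card_Int_Diff finite_Diff)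
    moreover have "card (?P \<inter> {j, Suc j}) = (if j \<in> ?P then 1 else 0) + (if Suc j \<in> ?P then 1 else 0)"
      by (auto simp: Int_insert_right)
    ultimately show ?thesis by simp
  qed
  show ?thesis using c1 c2 by simp
qed

end


lemma sum_Q:
  fixes w :: "nat \<Rightarrow> 'a::comm_ring_1"
  assumes sub: "P \<subseteq> {1..<n}" and noadj: "\<And>i. i \<in> P \<Longrightarrow> Suc i \<notin> P"
  shows "(\<Sum>j<n. w (if j \<in> P \<or> Suc j \<in> P then card P else Suc (card P)))
     = of_nat (2 * card P) * w (card P) + of_nat (n - 2 * card P) * w (Suc (card P))"
    and "2 * card P \<le> n"
proof -
  have finP: "finite P" using sub finite_subset by blast
  let ?Q = "{..<n} \<inter> {j. j \<in> P \<or> Suc j \<in> P}"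
  have Qeq: "?Q = P \<union> (\<lambda>i. i - 1) ` P"
    using sub by (force simp: image_iff)
  have inj: "inj_on (\<lambda>i. i - 1) P"
  proof (rule inj_onI)
    fix x y assume "x \<in> P" "y \<in> P" "x - 1 = y - 1"
    moreover have "x \<ge> 1" "y \<ge> 1" using sub \<open>x \<in> P\<close> \<open>y \<in> P\<close> by auto
    ultimately show "x = y" by simp
  qed
  have disj: "P \<inter> (\<lambda>i. i - 1) ` P = {}"
    using sub noadj by (force simp: image_iff)
  have cQ: "card ?Q = 2 * card P"
    unfolding Qeq using card_Un_disjoint[OF finP finite_imageI[OF finP] disj] card_image[OF inj]
    by simp
  have "card ?Q \<le> n" using card_mono[of "{..<n}" ?Q] by auto
  then show le: "2 * card P \<le> n" using cQ by simp
  have cD: "card ({..<n} \<inter> - {j. j \<in> P \<or> Suc j \<in> P}) = n - 2 * card P"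
  proof -
    have "{..<n} \<inter> - {j. j \<in> P \<or> Suc j \<in> P} = {..<n} - ?Q" by auto
    then show ?thesis using cQ card_Diff_subset[of ?Q "{..<n}"] by auto
  qed
  show "(\<Sum>j<n. w (if j \<in> P \<or> Suc j \<in> P then card P else Suc (card P)))
     = of_nat (2 * card P) * w (card P) + of_nat (n - 2 * card P) * w (Suc (card P))"
    by (simp add: if_distrib[of w] sum.If_cases cQ cD)
qed

definition PL :: "nat \<Rightarrow> nat list set" where
  "PL n = {xs. distinct xs \<and> set xs = {1..n}}"

lemma PL_fin: "finite (PL n)"
proof -
  have "PL n \<subseteq> {xs. set xs \<subseteq> {1..n} \<and> length xs = n}"
    by (auto simp: PL_def distinct_card[symmetric])
  then show ?thesis using finite_lists_length_eq[of "{1..n}" n] finite_subset by auto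
qed

lemma len_PL: "xs \<in> PL n \<Longrightarrow> length xs = n"
  by (auto simp: PL_def distinct_card[symmetric])

lemma set_ins: "set (ins j x ys) = insert x (set ys)"
proof -
  have "set ys = set (take j ys) \<union> set (drop j ys)"
    by (metis append_take_drop_id set_append)
  then show ?thesis by (auto simp: ins_def)
qed

lemma distinct_ins: "distinct ys \<Longrightarrow> x \<notin> set ys \<Longrightarrow> distinct (ins j x ys)"
proof -
  assume d: "distinct ys" and x: "x \<notin> set ys"
  have "set (take j ys) \<inter> set (drop j ys) = {}" "distinct (take j ys)" "distinct (drop j ys)"
    using d set_take_disj_set_drop_if_distinct[OF d, of j j] by auto
  then show ?thesis using x by (auto simp: ins_def dest: in_set_takeD in_set_dropD)
qed

lemma PL_Suc: "PL (Suc n) = (\<lambda>(ys, j). ins j (Suc n) ys) ` (PL n \<times> {0..n})"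
proof (rule set_eqI, rule iffI)
  fix xs assume xs: "xs \<in> PL (Suc n)"
  then have "Suc n \<in> set xs" by (auto simp: PL_def)
  then obtain as bs where d: "xs = as @ Suc n # bs" by (meson in_set_conv_decomp)
  have s: "insert (Suc n) (set (as @ bs)) = {1..Suc n}" "Suc n \<notin> set (as @ bs)" "distinct (as @ bs)"
    using xs unfolding d PL_def by auto
  have "set (as @ bs) = {1..Suc n} - {Suc n}" using s(1,2) by blast
  also have "\<dots> = {1..n}" by auto
  finally have "as @ bs \<in> PL n" using s(3) by (simp add: PL_def)
  moreover have "ins (length as) (Suc n) (as @ bs) = xs" by (simp add: ins_def d)
  moreover have "length as \<le> n" using len_PL[OF xs] d by simp
  ultimately show "xs \<in> (\<lambda>(ys, j). ins j (Suc n) ys) ` (PL n \<times> {0..n})"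
    by (force simp: image_iff)
next
  fix xs assume "xs \<in> (\<lambda>(ys, j). ins j (Suc n) ys) ` (PL n \<times> {0..n})"
  then obtain ys j where "ys \<in> PL n" "xs = ins j (Suc n) ys" by auto
  then have y: "distinct ys" "set ys = {1..n}" and xs: "xs = ins j (Suc n) ys" by (auto simp: PL_def)
  have "distinct xs" unfolding xs by (rule distinct_ins[OF y(1)]) (simp add: y(2))
  moreover have "set xs = {1..Suc n}" unfolding xs set_ins y(2) by auto
  ultimately show "xs \<in> PL (Suc n)" by (simp add: PL_def)
qed

lemma PL_inj: "inj_on (\<lambda>(ys, j). ins j (Suc n) ys) (PL n \<times> {0..n})"
proof (rule inj_onI, clarify)
  fix ys j ys' j' assume a: "ys \<in> PL n" "j \<in> {0..n}" "ys' \<in> PL n" "j' \<in> {0..n}"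
    and e: "ins j (Suc n) ys = ins j' (Suc n) ys'"
  have "Suc n \<notin> set ys" "Suc n \<notin> set ys'" using a by (auto simp: PL_def)
  then have n1: "Suc n \<notin> set (take j ys)" and n2: "Suc n \<notin> set (drop j ys)"
    by (auto dest: in_set_takeD in_set_dropD)
  have e2: "take j ys @ Suc n # drop j ys = take j' ys' @ Suc n # drop j' ys'"
    using e by (simp only: ins_def)
  have t: "take j ys = take j' ys' \<and> drop j ys = drop j' ys'"
    using e2 by (simp only: append_Cons_eq_iff[OF n1 n2])
  have "ys = take j ys @ drop j ys" by simp
  also have "\<dots> = take j' ys' @ drop j' ys'" using t by simp
  also have "\<dots> = ys'" by simp
  finally have y: "ys = ys'" .
  have "length ys = n" "length ys' = n" using a len_PL by auto
  then have "length (take j ys) = j" "length (take j' ys') = j'" using a by auto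
  then show "ys = ys' \<and> j = j'" using y t by metis
qed



definition G :: "nat \<Rightarrow> (nat \<Rightarrow> 'a::comm_ring_1) \<Rightarrow> 'a" where
  "G n w = (\<Sum>xs\<in>PL n. (-1) ^ card (rmset xs) * w (card (peakset xs)))"

lemma peak_sub: "peakset ys \<subseteq> {1..<length ys}"
  by (auto simp: peakset_def)

lemma noadj: "i \<in> peakset ys \<Longrightarrow> Suc i \<notin> peakset ys"
  by (auto simp: peakset_def)

lemma per_ys:
  fixes w :: "nat \<Rightarrow> 'a::comm_ring_1"
  assumes ys: "ys \<in> PL n"
  shows "(\<Sum>j\<in>{0..n}. (-1) ^ card (rmset (ins j (Suc n) ys)) * w (card (peakset (ins j (Suc n) ys))))
    = (-1) ^ card (rmset ys) * (of_int (2 * int (card (peakset ys)) - 1) * w (card (peakset ys))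
        + of_int (int n - 2 * int (card (peakset ys))) * w (Suc (card (peakset ys))))"
proof -
  let ?P = "peakset ys" and ?p = "card (peakset ys)" and ?r = "card (rmset ys)"
  have len: "length ys = n" using len_PL[OF ys] .
  have lt: "\<forall>y\<in>set ys. y < Suc n" using ys by (auto simp: PL_def)
  have M0: "(0::nat) < Suc n" by simp
  have Psub: "?P \<subseteq> {1..<n}" using peak_sub[of ys] len by simp
  have t1: "(-1) ^ card (rmset (ins j (Suc n) ys)) * w (card (peakset (ins j (Suc n) ys)))
     = (-1) ^ ?r * w (if j \<in> ?P \<or> Suc j \<in> ?P then ?p else Suc ?p)" if "j < n" for j
  proof -
    have jl: "j \<le> length ys" using that len by simp
    have "card (rmset (ins j (Suc n) ys)) = ?r" using card_rm[OF lt M0 jl] that len by simp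
    moreover have "card (peakset (ins j (Suc n) ys)) = (if j \<in> ?P \<or> Suc j \<in> ?P then ?p else Suc ?p)"
      using card_pk[OF lt M0 jl] that len noadj[of j ys] by (auto split: if_splits)
    ultimately show ?thesis by simp
  qed
  have t2: "(-1) ^ card (rmset (ins n (Suc n) ys)) * w (card (peakset (ins n (Suc n) ys)))
     = - ((-1) ^ ?r * w ?p)"
  proof -
    have jl: "n \<le> length ys" using len by simp
    have "card (rmset (ins n (Suc n) ys)) = Suc ?r" using card_rm[OF lt M0 jl] len by simp
    moreover have "n \<notin> ?P" "Suc n \<notin> ?P" using Psub by auto
    then have "card (peakset (ins n (Suc n) ys)) = ?p"
      using card_pk[OF lt M0 jl] len by simp
    ultimately show ?thesis by simp
  qed
  have eq: "{0..n} = insert n {..<n}" by auto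
  have "(\<Sum>j\<in>{0..n}. (-1) ^ card (rmset (ins j (Suc n) ys)) * w (card (peakset (ins j (Suc n) ys))))
      = (\<Sum>j<n. (-1) ^ ?r * w (if j \<in> ?P \<or> Suc j \<in> ?P then ?p else Suc ?p)) - (-1) ^ ?r * w ?p"
    unfolding eq by (simp add: t1 t2)
  also have "\<dots> = (-1) ^ ?r * (of_nat (2 * ?p) * w ?p + of_nat (n - 2 * ?p) * w (Suc ?p)) - (-1) ^ ?r * w ?p"
    by (simp add: sum_distrib_left[symmetric] sum_Q(1)[OF Psub noadj])
  also have "\<dots> = (-1) ^ ?r * (of_int (2 * int ?p - 1) * w ?p + of_int (int n - 2 * int ?p) * w (Suc ?p))"
  proof -
    have le: "2 * ?p \<le> n" using sum_Q(2)[OF Psub noadj] .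
    have e1: "(of_nat (n - 2 * ?p) :: 'a) = of_nat n - 2 * of_nat ?p"
      using le by (simp add: of_nat_diff)
    have e2: "(of_int (int n - 2 * int ?p) :: 'a) = of_nat n - 2 * of_nat ?p" by simp
    have e3: "(of_int (2 * int ?p - 1) :: 'a) = 2 * of_nat ?p - 1" by simp
    show ?thesis unfolding e1 e2 e3 by (simp add: algebra_simps)
  qed
  finally show ?thesis .
qed

lemma G_Suc: "G (Suc n) w = G n (\<lambda>k. of_int (2 * int k - 1) * w k + of_int (int n - 2 * int k) * w (Suc k))"
proof -
  let ?h = "\<lambda>xs. (-1) ^ card (rmset xs) * w (card (peakset xs))"
  have "G (Suc n) w = sum ?h ((\<lambda>(ys, j). ins j (Suc n) ys) ` (PL n \<times> {0..n}))"
    by (simp add: G_def PL_Suc)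
  also have "\<dots> = (\<Sum>(ys, j)\<in>PL n \<times> {0..n}. ?h (ins j (Suc n) ys))"
    by (subst sum.reindex[OF PL_inj]) (simp add: case_prod_beta)
  also have "\<dots> = (\<Sum>ys\<in>PL n. \<Sum>j\<in>{0..n}. ?h (ins j (Suc n) ys))"
    by (simp add: sum.cartesian_product)
  also have "\<dots> = G n (\<lambda>k. of_int (2 * int k - 1) * w k + of_int (int n - 2 * int k) * w (Suc k))"
    unfolding G_def by (rule sum.cong) (simp_all add: per_ys)
  finally show ?thesis .
qed



definition cc :: "nat \<Rightarrow> nat \<Rightarrow> int" where
  "cc n k = (-1) ^ (n + k) * int (n div 2 choose k)"

lemma absorb: "int (Suc k) * int (m choose Suc k) = (int m - int k) * int (m choose k)"
proof (cases "k \<le> m")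
  case True
  have "Suc k * (m choose Suc k) = (m - k) * (m choose k)"
  proof (cases m)
    case 0 then show ?thesis by simp
  next
    case (Suc m0)
    have "Suc k * (Suc m0 choose Suc k) = Suc m0 * (m0 choose k)"
      using Suc_times_binomial_eq[of m0 k] by simp
    also have "\<dots> = (Suc m0 - k) * (Suc m0 choose k)"
      using binomial_absorb_comp[of "Suc m0" k] by simp
    finally show ?thesis using Suc by simp
  qed
  then have "int (Suc k * (m choose Suc k)) = int ((m - k) * (m choose k))" by simp
  then show ?thesis using True by (simp add: of_nat_diff algebra_simps)
next
  case False then show ?thesis by (simp add: binomial_eq_0)
qed

lemma cc_rec: "cc (Suc n) k = (2 * int k - 1) * cc n k
   + (if k = 0 then 0 else (int n - 2 * int (k - 1)) * cc n (k - 1))"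
proof (cases k)
  case 0 then show ?thesis by (simp add: cc_def)
next
  case (Suc k')
  let ?m = "n div 2"
  have ab: "int (Suc k') * int (?m choose Suc k') = (int ?m - int k') * int (?m choose k')"
    by (rule absorb)
  have key: "int (Suc n div 2 choose Suc k') = - (2 * int k' + 1) * int (?m choose Suc k')
     + (int n - 2 * int k') * int (?m choose k')"
  proof (cases "even n")
    case True
    then have "Suc n div 2 = ?m" by presburger
    moreover have "int n = 2 * int ?m" using True by presburger
    ultimately show ?thesis using ab by (simp add: algebra_simps)
  next
    case False
    then have "Suc n div 2 = Suc ?m" by presburger
    moreover have "int n = 2 * int ?m + 1" using False by presburger
    ultimately show ?thesis using ab by (simp add: algebra_simps)
  qed
  let ?e = "(-1::int) ^ (n + k')"
  have h1: "cc (Suc n) (Suc k') = ?e * int (Suc n div 2 choose Suc k')" by (simp add: cc_def)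
  have h2: "cc n (Suc k') = - ?e * int (?m choose Suc k')" by (simp add: cc_def)
  have h3: "cc n k' = ?e * int (?m choose k')" by (simp add: cc_def)
  have "cc (Suc n) (Suc k') = ?e * (- (2 * int k' + 1) * int (?m choose Suc k')
     + (int n - 2 * int k') * int (?m choose k'))" unfolding h1 key ..
  also have "\<dots> = (2 * int (Suc k') - 1) * cc n (Suc k') + (int n - 2 * int k') * cc n k'"
    unfolding h2 h3 by (simp add: algebra_simps)
  finally show ?thesis using Suc by simp
qed

definition D :: "nat \<Rightarrow> nat \<Rightarrow> 'a::comm_ring_1" where
  "D k i = (if i = k then 1 else 0)"

lemma G_add: "G n (\<lambda>k. u k + v k) = G n u + G n v"
  by (simp add: G_def sum.distrib algebra_simps)

lemma G_scale: "G n (\<lambda>i. a i * D k i) = a k * G n (D k)"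
proof -
  have "(\<lambda>i. a i * D k i) = (\<lambda>i. a k * D k i)" by (auto simp: D_def)
  then show ?thesis by (simp add: G_def sum_distrib_left algebra_simps)
qed

lemma G0: "G 0 w = w 0"
proof -
  have "PL 0 = {[]}" by (auto simp: PL_def)
  moreover have "rmset [] = {}" "peakset [] = {}" by (auto simp: rmset_def peakset_def)
  ultimately show ?thesis by (simp add: G_def)
qed

lemma G_D: "G n (D k :: nat \<Rightarrow> 'a::comm_ring_1) = of_int (cc n k)"
proof (induction n arbitrary: k)
  case 0 then show ?case by (cases k) (simp_all add: G0 D_def cc_def)
next
  case (Suc n)
  have f: "(\<lambda>i. of_int (2 * int i - 1) * (D k i :: 'a) + of_int (int n - 2 * int i) * D k (Suc i))
     = (\<lambda>i. of_int (2 * int i - 1) * D k i + (if k = 0 then 0 else of_int (int n - 2 * int i) * D (k - 1) i))"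
    unfolding D_def by (rule ext) auto
  have "G (Suc n) (D k :: nat \<Rightarrow> 'a) = of_int (2 * int k - 1) * G n (D k)
     + (if k = 0 then 0 else of_int (int n - 2 * int (k - 1)) * G n (D (k - 1)))"
  proof (cases "k = 0")
    case True
    then show ?thesis unfolding G_Suc f by (simp add: G_scale)
  next
    case False
    then show ?thesis unfolding G_Suc f by (simp add: G_add G_scale)
  qed
  also have "\<dots> = of_int (cc (Suc n) k)"
    unfolding cc_rec by (cases "k = 0") (simp_all add: Suc.IH)
  finally show ?case .
qed

lemma G_expand:
  fixes w :: "nat \<Rightarrow> 'a::comm_ring_1"
  shows "G n w = (\<Sum>i\<le>n. w i * G n (D i))"
proof -
  have "(\<Sum>i\<le>n. w i * G n (D i)) = (\<Sum>i\<le>n. \<Sum>xs\<in>PL n. w i * ((-1) ^ card (rmset xs) * D i (card (peakset xs))))"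
    unfolding G_def sum_distrib_left ..
  also have "\<dots> = (\<Sum>xs\<in>PL n. \<Sum>i\<le>n. w i * ((-1) ^ card (rmset xs) * D i (card (peakset xs))))"
    by (rule sum.swap)
  also have "\<dots> = (\<Sum>xs\<in>PL n. \<Sum>i\<le>n. (-1) ^ card (rmset xs) * (w i * D i (card (peakset xs))))"
    by (simp only: mult.left_commute)
  also have "\<dots> = (\<Sum>xs\<in>PL n. (-1) ^ card (rmset xs) * w (card (peakset xs)))"
  proof (rule sum.cong)
    fix xs assume "xs \<in> PL n"
    then have "card (peakset xs) \<le> n" using peak_sub[of xs] len_PL card_mono[of "{1..<n}" "peakset xs"]
      by fastforce
    then show "(\<Sum>i\<le>n. (-1) ^ card (rmset xs) * (w i * D i (card (peakset xs)))) =
          (-1) ^ card (rmset xs) * w (card (peakset xs))"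
    proof -
      have "(\<Sum>i\<le>n. (-1) ^ card (rmset xs) * (w i * D i (card (peakset xs))))
         = (\<Sum>i\<le>n. if i = card (peakset xs) then (-1) ^ card (rmset xs) * w i else 0)"
        by (rule sum.cong) (auto simp: D_def)
      then show ?thesis using \<open>card (peakset xs) \<le> n\<close> by (simp add: sum.delta)
    qed
  qed simp
  finally show ?thesis by (simp add: G_def)
qed

lemma G_pow: "G n (\<lambda>k. u ^ k) = (-1) ^ n * (1 - u) ^ (n div 2)"
proof -
  have "G n (\<lambda>k. u ^ k) = (\<Sum>i\<le>n. u ^ i * of_int (cc n i))"
    by (subst G_expand) (simp add: G_D)
  also have "\<dots> = (-1) ^ n * (\<Sum>i\<le>n. of_nat (n div 2 choose i) * (- u) ^ i)"
  proof -
    have "u ^ i * of_int (cc n i) = (-1) ^ n * (of_nat (n div 2 choose i) * (- u) ^ i)" for i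
    proof -
      have "(of_int (cc n i) :: 'a) = (-1) ^ n * (-1) ^ i * of_nat (n div 2 choose i)"
        by (simp add: cc_def power_add)
      moreover have "(- u) ^ i = (-1) ^ i * u ^ i" by (rule power_minus)
      ultimately show ?thesis by (simp add: mult_ac)
    qed
    then show ?thesis by (simp add: sum_distrib_left)
  qed
  also have "(\<Sum>i\<le>n. of_nat (n div 2 choose i) * (- u) ^ i) = (\<Sum>i\<le>n div 2. of_nat (n div 2 choose i) * (- u) ^ i)"
    by (rule sum.mono_neutral_right) (simp_all add: binomial_eq_0 not_le)
  also have "\<dots> = (1 - u) ^ (n div 2)"
    using binomial_ring[of "- u" 1 "n div 2"] by (simp add: algebra_simps)
  finally show ?thesis .
qed



lemma vl_map: "i \<le> n \<Longrightarrow> vl (map \<sigma> [Suc 0..<Suc n]) i = perm_val \<sigma> i"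
  by (auto simp: vl_def perm_val_def simp del: upt_Suc)

lemma lp_eq: "left_peaks n \<sigma> = card (peakset (map \<sigma> [1..<Suc n]))"
proof -
  have "{i. 1 \<le> i \<and> i < n \<and> perm_val \<sigma> (i - 1) < perm_val \<sigma> i \<and> perm_val \<sigma> i > perm_val \<sigma> (i + 1)}
      = peakset (map \<sigma> [1..<Suc n])"
    by (auto simp: peakset_def vl_map simp del: upt_Suc)
  then show ?thesis by (simp add: left_peaks_def)
qed

lemma rm_eq: "rl_min n \<sigma> = card (rmset (map \<sigma> [1..<Suc n]))"
proof -
  have "{i. 1 \<le> i \<and> i \<le> n \<and> (\<forall>j. i < j \<and> j \<le> n \<longrightarrow> perm_val \<sigma> j > perm_val \<sigma> i)}
      = rmset (map \<sigma> [1..<Suc n])"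
    by (auto simp: rmset_def vl_map simp del: upt_Suc)
  then show ?thesis by (simp add: rl_min_def)
qed

lemma bij_PL: "bij_betw (\<lambda>\<sigma>. map \<sigma> [1..<Suc n]) {\<sigma>. \<sigma> permutes {1..n}} (PL n)"
proof (rule bij_betw_imageI)
  show "inj_on (\<lambda>\<sigma>. map \<sigma> [1..<Suc n]) {\<sigma>. \<sigma> permutes {1..n}}"
  proof (rule inj_onI)
    fix \<sigma> \<tau> assume s: "\<sigma> \<in> {\<sigma>. \<sigma> permutes {1..n}}" "\<tau> \<in> {\<sigma>. \<sigma> permutes {1..n}}"
      and e: "map \<sigma> [1..<Suc n] = map \<tau> [1..<Suc n]"
    show "\<sigma> = \<tau>"
    proof
      fix x show "\<sigma> x = \<tau> x"
      proof (cases "x \<in> {1..n}")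
        case True
        then have "map \<sigma> [1..<Suc n] ! (x - 1) = map \<tau> [1..<Suc n] ! (x - 1)" using e by (simp only:)
        moreover have "vl (map \<sigma> [Suc 0..<Suc n]) x = \<sigma> x" "vl (map \<tau> [Suc 0..<Suc n]) x = \<tau> x"
          using vl_map[of x n \<sigma>] vl_map[of x n \<tau>] True by (auto simp: perm_val_def)
        ultimately show ?thesis using True by (simp add: vl_def del: upt_Suc)
      next
        case False
        have "\<sigma> permutes {1..n}" "\<tau> permutes {1..n}" using s by auto
        then have "\<sigma> x = x" "\<tau> x = x" using permutes_not_in False by metis+
        then show ?thesis by simp
      qed
    qed
  qed
next
  show "(\<lambda>\<sigma>. map \<sigma> [1..<Suc n]) ` {\<sigma>. \<sigma> permutes {1..n}} = PL n"
  proof (rule set_eqI, rule iffI)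
    fix xs assume "xs \<in> (\<lambda>\<sigma>. map \<sigma> [1..<Suc n]) ` {\<sigma>. \<sigma> permutes {1..n}}"
    then obtain \<sigma> where s: "\<sigma> permutes {1..n}" and xs: "xs = map \<sigma> [1..<Suc n]" by auto
    have "distinct xs" unfolding xs using permutes_inj[OF s]
      by (simp add: distinct_map inj_on_subset[of \<sigma> UNIV])
    moreover have "set xs = {1..n}" unfolding xs using permutes_image[OF s]
      by (simp add: atLeastLessThanSuc_atLeastAtMost del: upt_Suc)
    ultimately show "xs \<in> PL n" by (simp add: PL_def)
  next
    fix xs assume xs: "xs \<in> PL n"
    then have d: "distinct xs" and st: "set xs = {1..n}" and l: "length xs = n"
      using len_PL by (auto simp: PL_def)
    define \<sigma> where "\<sigma> i = (if i \<in> {1..n} then xs ! (i - 1) else i)" for i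
    have inj: "inj_on \<sigma> {1..n}"
    proof (rule inj_onI)
      fix a b assume "a \<in> {1..n}" "b \<in> {1..n}" "\<sigma> a = \<sigma> b"
      then have "xs ! (a - 1) = xs ! (b - 1)" "a - 1 < length xs" "b - 1 < length xs"
        using l by (auto simp: \<sigma>_def)
      then have "a - 1 = b - 1" using d nth_eq_iff_index_eq by blast
      then show "a = b" using \<open>a \<in> {1..n}\<close> \<open>b \<in> {1..n}\<close> by auto
    qed
    have img: "\<sigma> ` {1..n} \<subseteq> {1..n}"
    proof
      fix y assume "y \<in> \<sigma> ` {1..n}"
      then obtain a where a: "a \<in> {1..n}" "y = xs ! (a - 1)" by (auto simp: \<sigma>_def)
      then have "y \<in> set xs" using l by auto
      then show "y \<in> {1..n}" using st by simp
    qed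
    have "\<sigma> ` {1..n} = {1..n}"
      using img inj by (simp add: card_subset_eq card_image)
    then have "\<sigma> permutes {1..n}"
      using inj by (intro bij_imp_permutes) (auto simp: bij_betw_def \<sigma>_def)
    moreover have "map \<sigma> [1..<Suc n] = xs"
      by (rule nth_equalityI) (auto simp: l \<sigma>_def simp del: upt_Suc)
    ultimately show "xs \<in> (\<lambda>\<sigma>. map \<sigma> [1..<Suc n]) ` {\<sigma>. \<sigma> permutes {1..n}}" by force
  qed
qed

theorem theorem1p7:
  fixes n :: nat and u :: "'a :: comm_ring_1"
  assumes "n \<ge> 1"
  shows "(\<Sum>\<sigma> \<in> {\<sigma>. \<sigma> permutes {1..n}}. u ^ left_peaks n \<sigma> * (-1) ^ rl_min n \<sigma>)
         = (if even n then (1 - u) ^ (n div 2) else - ((1 - u) ^ (n div 2)))"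
proof -
  have "(\<Sum>\<sigma> \<in> {\<sigma>. \<sigma> permutes {1..n}}. u ^ left_peaks n \<sigma> * (-1) ^ rl_min n \<sigma>)
     = (\<Sum>\<sigma> \<in> {\<sigma>. \<sigma> permutes {1..n}}. (\<lambda>xs. (-1) ^ card (rmset xs) * u ^ card (peakset xs)) (map \<sigma> [1..<Suc n]))"
    by (simp add: lp_eq rm_eq mult.commute)
  also have "\<dots> = G n (\<lambda>k. u ^ k)"
    unfolding G_def by (rule sum.reindex_bij_betw[OF bij_PL])
  also have "\<dots> = (-1) ^ n * (1 - u) ^ (n div 2)" by (rule G_pow)
  finally show ?thesis by simp
qed


end
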